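(* Let $\mathcal{N}$ be a real affine space and let $D$ be a convex subset of $\mathbb{R}\times\mathcal{N}$. Let $\mathcal{B}:D\to\mathbb{R}$ be continuous on every finite-dimensional affine subset of $D$, and let $c$ be a function on $D$. Suppose that whenever $(\mathbf{f},N),(\mathbf{f}_\pm,N_\pm)\in D$ satisfy $\mathbf{f}=(\mathbf{f}_++\mathbf{f}_-)/2$ and $N=(N_++N_-)/2$, we have $$\frac{\mathcal{B}(\mathbf{f}_+,N_+)+\mathcal{B}(\mathbf{f}_-,N_-)}{2}-\mathcal{B}(\mathbf{f},N)\ge c(\mathbf{f},N)\,|\mathbf{f}_+-\mathbf{f}|^2\ge0 .$$ Then for all $(\mathbf{f}_k,N_k)\in D$ and $\gamma_k\ge0$, $k=1,\dots,n$, with $\sum_{k=1}^n\gamma_k=1$, setting $\mathbf{f}=\sum_k\gamma_k\mathbf{f}_k$ and $N=\sum_k\gamma_kN_k$, we have $$-\mathcal{B}(\mathbf{f},N)+\sum_{k=1}^n\gamma_k\,\mathcal{B}(\mathbf{f}_k,N_k)\ge\frac14\,c(\mathbf{f},N)\Big(\sum_{k=1}^n\gamma_k|\mathbf{f}_k-\mathbf{f}|\Big)^2 .$$ *)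

theory Defs
  imports "HOL-Analysis.Analysis"
begin

text \<open>The affine space N is modelled as a real vector space 'a (an origin chosen).
  A finite-dimensional affine subset of real \<times> 'a lies in the linear span of finitely
  many points p 0, ..., p (m-1); its canonical (Euclidean) topology is the one
  transported along the linear surjection t \<mapsto> sum of t i scaled by p i from R^m.
  Since these spaces are metrizable and the parametrisation is an open surjection,
  continuity of B on D intersected with such a subset is expressed sequentially
  via coefficient sequences.\<close>

definition fd_comb :: "nat \<Rightarrow> (nat \<Rightarrow> 'v::real_vector) \<Rightarrow> (nat \<Rightarrow> real) \<Rightarrow> 'v" where
  "fd_comb m p t = (\<Sum>i<m. t i *\<^sub>R p i)"

definition fin_dim_continuous :: "'v::real_vector set \<Rightarrow> ('v \<Rightarrow> real) \<Rightarrow> bool" where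
  "fin_dim_continuous D B \<longleftrightarrow>
     (\<forall>(m::nat) (p::nat \<Rightarrow> 'v) (t::nat \<Rightarrow> nat \<Rightarrow> real) (s::nat \<Rightarrow> real).
        (\<forall>j. fd_comb m p (t j) \<in> D) \<and> fd_comb m p s \<in> D \<and>
        (\<forall>i<m. (\<lambda>j. t j i) \<longlonglongrightarrow> s i)
        \<longrightarrow> (\<lambda>j. B (fd_comb m p (t j))) \<longlonglongrightarrow> B (fd_comb m p s))"

end

theory Submission imports Defs begin

lemma midconv_cont_convex:
  fixes g :: "real \<Rightarrow> real"
  assumes cont: "continuous_on {0..1} g"
    and mc: "\<And>a b. a \<in> {0..1} \<Longrightarrow> b \<in> {0..1} \<Longrightarrow> g ((a+b)/2) \<le> (g a + g b)/2"
    and t: "t \<in> {0..1}"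
  shows "g t \<le> (1-t) * g 0 + t * g 1"
proof (rule ccontr)
  assume neg: "\<not> ?thesis"
  define h where "h s = g s - ((1-s) * g 0 + s * g 1)" for s
  have hc: "continuous_on {0..1} h" unfolding h_def
    by (intro continuous_intros cont)
  have hm: "h ((a+b)/2) \<le> (h a + h b)/2" if "a \<in> {0..1}" "b \<in> {0..1}" for a b
    using mc[OF that] unfolding h_def by (simp add: field_simps)
  have h0: "h 0 = 0" and h1: "h 1 = 0" unfolding h_def by simp_all
  obtain xm where xm: "xm \<in> {0..1}" "\<And>y. y \<in> {0..1} \<Longrightarrow> h y \<le> h xm"
    using continuous_attains_sup[OF compact_Icc _ hc] by auto
  define M where "M = h xm"
  have Mpos: "M > 0" using xm(2)[OF t] neg unfolding M_def h_def by simp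
  define T where "T = {s \<in> {0..1}. h s = M}"
  have Tc: "closed T" unfolding T_def by (rule continuous_closed_preimage_constant[OF hc closed_atLeastAtMost])
  have Tne: "T \<noteq> {}" using xm unfolding T_def M_def by auto
  have Tb: "bdd_below T" unfolding T_def by (auto intro: bdd_belowI[of _ 0])
  define t0 where "t0 = Inf T"
  have t0T: "t0 \<in> T" unfolding t0_def by (rule closed_contains_Inf[OF Tne Tb Tc])
  have low: "t0 \<le> s" if "s \<in> T" for s unfolding t0_def using cInf_lower[OF that Tb] .
  have t01: "0 < t0" "t0 < 1" using t0T h0 h1 Mpos unfolding T_def
    by (auto simp: order_le_less)
  define d where "d = min t0 (1-t0)"
  have dpos: "d > 0" using t01 unfolding d_def by simp
  have a01: "t0 - d \<in> {0..1}" and b01: "t0 + d \<in> {0..1}" using t01 unfolding d_def by auto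
  have hb: "h (t0+d) \<le> M" using xm(2)[OF b01] unfolding M_def .
  have ha: "h (t0-d) < M"
  proof -
    have "t0 - d \<notin> T" using low[of "t0-d"] dpos by auto
    then have "h (t0-d) \<noteq> M" using a01 unfolding T_def by auto
    moreover have "h (t0-d) \<le> M" using xm(2)[OF a01] unfolding M_def .
    ultimately show ?thesis by simp
  qed
  have "h t0 \<le> (h (t0-d) + h (t0+d))/2" using hm[OF a01 b01] by simp
  also have "\<dots> < M" using ha hb by simp
  finally show False using t0T unfolding T_def by simp
qed


lemma B_convex:
  fixes D :: "'v::real_vector set" and B :: "'v \<Rightarrow> real"
  assumes convD: "convex D" and contB: "fin_dim_continuous D B"
    and mc: "\<And>u v. u \<in> D \<Longrightarrow> v \<in> D \<Longrightarrow> B ((1/2) *\<^sub>R (u + v)) \<le> (B u + B v)/2"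
  shows "convex_on D B"
proof (rule convex_onI[OF _ convD])
  fix t :: real and x y assume t: "t > 0" "t < 1" and x: "x \<in> D" and y: "y \<in> D"
  define g where "g s = B ((1-s) *\<^sub>R x + s *\<^sub>R y)" for s
  have inD: "(1-s) *\<^sub>R x + s *\<^sub>R y \<in> D" if "s \<in> {0..1}" for s
    using convexD[OF convD x y, of "1-s" s] that by auto
  define p where "p = (\<lambda>i::nat. if i = 0 then x else y)"
  define tt where "tt = (\<lambda>s::real. \<lambda>i::nat. if i = 0 then 1 - s else s)"
  have fd: "fd_comb 2 p (tt s) = (1-s) *\<^sub>R x + s *\<^sub>R y" for s
    by (simp add: fd_comb_def p_def tt_def numeral_2_eq_2 lessThan_Suc)
  have cont: "continuous_on {0..1} g"
  proof (rule continuous_on_sequentiallyI)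
    fix u :: "nat \<Rightarrow> real" and a :: real assume u: "\<forall>n. u n \<in> {0..1}" and a: "a \<in> {0..1}" and lim: "u \<longlonglongrightarrow> a"
    have "(\<lambda>j. B (fd_comb 2 p (tt (u j)))) \<longlonglongrightarrow> B (fd_comb 2 p (tt a))"
    proof (rule contB[unfolded fin_dim_continuous_def, rule_format])
      show "(\<forall>j. fd_comb 2 p (tt (u j)) \<in> D) \<and> fd_comb 2 p (tt a) \<in> D \<and>
        (\<forall>i<2. (\<lambda>j. tt (u j) i) \<longlonglongrightarrow> tt a i)"
        unfolding fd using u a inD lim by (auto simp: tt_def intro: tendsto_intros)
    qed
    then show "(\<lambda>n. g (u n)) \<longlonglongrightarrow> g a" by (simp add: fd g_def)
  qed
  have mid: "g ((a+b)/2) \<le> (g a + g b)/2" if "a \<in> {0..1}" "b \<in> {0..1}" for a b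
  proof -
    have "(1 - (a+b)/2) *\<^sub>R x + ((a+b)/2) *\<^sub>R y
        = (1/2) *\<^sub>R (((1-a) *\<^sub>R x + a *\<^sub>R y) + ((1-b) *\<^sub>R x + b *\<^sub>R y))"
      by (simp add: algebra_simps scaleR_add_left[symmetric] del: scaleR_add_left)
    then show ?thesis unfolding g_def using mc[OF inD[OF that(1)] inD[OF that(2)]] by simp
  qed
  have "g t \<le> (1-t) * g 0 + t * g 1"
    by (rule midconv_cont_convex[OF cont mid]) (use t in auto)
  then show "B ((1 - t) *\<^sub>R x + t *\<^sub>R y) \<le> (1 - t) * B x + t * B y" by (simp add: g_def)
qed


lemma two_point:
  fixes D :: "(real \<times> 'a::real_vector) set" and B c :: "real \<times> 'a \<Rightarrow> real"
  assumes convD: "convex D" and cvx: "convex_on D B"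
    and midc: "\<And>u v. u \<in> D \<Longrightarrow> v \<in> D \<Longrightarrow>
       (B u + B v)/2 - B ((1/2) *\<^sub>R (u+v)) \<ge> c ((1/2) *\<^sub>R (u+v)) * (fst u - fst ((1/2) *\<^sub>R (u+v)))^2"
    and P: "P \<in> D" and Q: "Q \<in> D" and al: "0 < \<alpha>" "\<alpha> \<le> 1/2"
    and x: "x = \<alpha> *\<^sub>R P + (1-\<alpha>) *\<^sub>R Q"
  shows "\<alpha> * B P + (1-\<alpha>) * B Q - B x \<ge> 2*(1-\<alpha>) * c x * (fst Q - fst x)^2"
proof -
  define l where "l = \<alpha>/(1-\<alpha>)"
  have l01: "0 \<le> l" "l \<le> 1" using al unfolding l_def by (auto simp: field_simps)
  have xD: "x \<in> D" using convexD[OF convD P Q, of \<alpha> "1-\<alpha>"] al x by auto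
  define Q' where "Q' = (1-l) *\<^sub>R x + l *\<^sub>R P"
  have Q'D: "Q' \<in> D" using convexD[OF convD xD P, of "1-l" l] l01 unfolding Q'_def by auto
  have Q'eq: "Q' = ((1-l)*\<alpha> + l) *\<^sub>R P + ((1-l)*(1-\<alpha>)) *\<^sub>R Q"
    unfolding Q'_def x by (simp add: algebra_simps)
  have la: "l*(1-\<alpha>) = \<alpha>" using al unfolding l_def by simp
  have c1: "(1-l)*\<alpha> + l = 2*\<alpha>" and c2: "(1-l)*(1-\<alpha>) = 1 - 2*\<alpha>"
    using la by (auto simp: algebra_simps)
  have xm: "(1/2) *\<^sub>R (Q + Q') = x"
    unfolding Q'eq c1 c2 x by (simp add: algebra_simps scaleR_add_left[symmetric] del: scaleR_add_left)
  have m: "(B Q + B Q')/2 - B x \<ge> c x * (fst Q - fst x)^2"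
    using midc[OF Q Q'D] unfolding xm .
  have cv: "B Q' \<le> (1-l) * B x + l * B P"
    using convex_onD[OF cvx, of l x P] l01 xD P unfolding Q'_def by simp
  have "B Q + l * B P - (1+l) * B x \<ge> 2 * (c x * (fst Q - fst x)^2)" using m cv
    by (simp add: algebra_simps)
  then have "(1-\<alpha>) * (B Q + l * B P - (1+l) * B x) \<ge> (1-\<alpha>) * (2 * (c x * (fst Q - fst x)^2))"
    using al by (intro mult_left_mono) auto
  moreover have "(1-\<alpha>) * (B Q + l * B P - (1+l) * B x)
      = (1-\<alpha>)*B Q + (l*(1-\<alpha>))*B P - (1-\<alpha>)*B x - (l*(1-\<alpha>))*B x"
    by (simp add: algebra_simps)
  also have "\<dots> = \<alpha> * B P + (1-\<alpha>) * B Q - B x" unfolding la by (simp add: algebra_simps)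
  ultimately show ?thesis by (simp add: algebra_simps)
qed


lemma pair_sum: "(\<Sum>k\<in>A. w k *\<^sub>R ((fs k, Ns k) :: real \<times> 'a::real_vector))
   = (\<Sum>k\<in>A. w k * fs k, \<Sum>k\<in>A. w k *\<^sub>R Ns k)"
  by (rule prod_eqI) (simp_all add: fst_sum snd_sum)

theorem lemma6p5:
  fixes D :: "(real \<times> 'a::real_vector) set"
    and B :: "real \<times> 'a \<Rightarrow> real"
    and c :: "real \<times> 'a \<Rightarrow> real"
  assumes convD: "convex D"
    and contB: "fin_dim_continuous D B"
    and mid: "\<And>f N fp Np fm Nm.
       (f, N) \<in> D \<Longrightarrow> (fp, Np) \<in> D \<Longrightarrow> (fm, Nm) \<in> D \<Longrightarrow>
       f = (fp + fm) / 2 \<Longrightarrow> N = (1/2) *\<^sub>R (Np + Nm) \<Longrightarrow>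
       (B (fp, Np) + B (fm, Nm)) / 2 - B (f, N) \<ge> c (f, N) * \<bar>fp - f\<bar>^2
       \<and> c (f, N) * \<bar>fp - f\<bar>^2 \<ge> 0"
  shows "\<And>(n::nat) (fs :: nat \<Rightarrow> real) (Ns :: nat \<Rightarrow> 'a) (\<gamma> :: nat \<Rightarrow> real).
       (\<forall>k\<in>{1..n}. (fs k, Ns k) \<in> D \<and> \<gamma> k \<ge> 0) \<Longrightarrow>
       (\<Sum>k=1..n. \<gamma> k) = 1 \<Longrightarrow>
       - B (\<Sum>k=1..n. \<gamma> k * fs k, \<Sum>k=1..n. \<gamma> k *\<^sub>R Ns k)
         + (\<Sum>k=1..n. \<gamma> k * B (fs k, Ns k))
       \<ge> 1/4 * c (\<Sum>k=1..n. \<gamma> k * fs k, \<Sum>k=1..n. \<gamma> k *\<^sub>R Ns k)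
           * (\<Sum>k=1..n. \<gamma> k * \<bar>fs k - (\<Sum>j=1..n. \<gamma> j * fs j)\<bar>)^2"
proof -
  have midc: "(B u + B v)/2 - B ((1/2) *\<^sub>R (u+v)) \<ge> c ((1/2) *\<^sub>R (u+v)) * (fst u - fst ((1/2) *\<^sub>R (u+v)))^2
     \<and> c ((1/2) *\<^sub>R (u+v)) * (fst u - fst ((1/2) *\<^sub>R (u+v)))^2 \<ge> 0"
    if u: "u \<in> D" and v: "v \<in> D" for u v
  proof -
    obtain fp Np where up: "u = (fp, Np)" by fastforce
    obtain fm Nm where vp: "v = (fm, Nm)" by fastforce
    have hw: "(1/2) *\<^sub>R (u+v) = ((fp+fm)/2, (1/2) *\<^sub>R (Np+Nm))" unfolding up vp by simp
    have "(1/2) *\<^sub>R (u+v) \<in> D" using convexD[OF convD u v, of "1/2" "1/2"]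
      by (simp add: scaleR_add_right)
    then have "((fp+fm)/2, (1/2) *\<^sub>R (Np+Nm)) \<in> D" unfolding hw .
    from mid[OF this u[unfolded up] v[unfolded vp] refl refl]
    show ?thesis unfolding hw up vp by simp
  qed
  have cvx: "convex_on D B"
  proof (rule B_convex[OF convD contB])
    fix u v assume "u \<in> D" "v \<in> D"
    from midc[OF this] show "B ((1/2) *\<^sub>R (u + v)) \<le> (B u + B v)/2" by linarith
  qed
  fix n :: nat and fs :: "nat \<Rightarrow> real" and Ns :: "nat \<Rightarrow> 'a" and \<gamma> :: "nat \<Rightarrow> real"
  assume H: "\<forall>k\<in>{1..n}. (fs k, Ns k) \<in> D \<and> \<gamma> k \<ge> 0" and s1: "(\<Sum>k=1..n. \<gamma> k) = 1"
  define I where "I = {1..n}"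
  define z where "z k = (fs k, Ns k)" for k
  define f where "f = (\<Sum>k\<in>I. \<gamma> k * fs k)"
  define Nx where "Nx = (\<Sum>k\<in>I. \<gamma> k *\<^sub>R Ns k)"
  define S where "S = (\<Sum>k\<in>I. \<gamma> k * \<bar>fs k - f\<bar>)"
  define x where "x = (f, Nx)"
  have fin: "finite I" unfolding I_def by simp
  have zD: "\<And>k. k \<in> I \<Longrightarrow> z k \<in> D" and g0: "\<And>k. k \<in> I \<Longrightarrow> \<gamma> k \<ge> 0"
    using H unfolding I_def z_def by auto
  have sI: "(\<Sum>k\<in>I. \<gamma> k) = 1" using s1 unfolding I_def .
  have Ine: "I \<noteq> {}" using sI by auto
  have xs: "x = (\<Sum>k\<in>I. \<gamma> k *\<^sub>R z k)" unfolding x_def f_def Nx_def z_def pair_sum ..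
  have xD: "x \<in> D" unfolding xs by (rule convex_sum[OF fin convD sI g0 zD])
  have jen: "B x \<le> (\<Sum>k\<in>I. \<gamma> k * B (z k))"
    unfolding xs by (rule convex_on_sum[OF fin Ine cvx sI g0 zD])
  have S0: "S \<ge> 0" unfolding S_def using g0 by (intro sum_nonneg) auto
  have goal: "- B x + (\<Sum>k\<in>I. \<gamma> k * B (z k)) \<ge> 1/4 * c x * S^2"
  proof (cases "c x < 0 \<or> S = 0")
    case True
    then have "1/4 * c x * S^2 \<le> 0"
      by (auto simp: mult_nonneg_nonpos mult_nonpos_nonneg)
    then show ?thesis using jen by linarith
  next
    case False
    then have cpos: "c x \<ge> 0" and Spos: "S > 0" using S0 by auto
    define Ip where "Ip = {k\<in>I. f \<le> fs k}"
    define Im where "Im = {k\<in>I. fs k < f}"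
    have dis: "Ip \<inter> Im = {}" and un: "I = Ip \<union> Im" unfolding Ip_def Im_def by auto
    have finp: "finite Ip" and finm: "finite Im" using fin unfolding Ip_def Im_def by auto
    have split: "(\<Sum>k\<in>I. h k) = (\<Sum>k\<in>Ip. h k) + (\<Sum>k\<in>Im. h k)" for h :: "nat \<Rightarrow> real"
      unfolding un by (rule sum.union_disjoint[OF finp finm dis])
    have splitv: "(\<Sum>k\<in>I. h k) = (\<Sum>k\<in>Ip. h k) + (\<Sum>k\<in>Im. h k)" for h :: "nat \<Rightarrow> real \<times> 'a"
      unfolding un by (rule sum.union_disjoint[OF finp finm dis])
    define Sp where "Sp = (\<Sum>k\<in>Ip. \<gamma> k * (fs k - f))"
    define Sm where "Sm = (\<Sum>k\<in>Im. \<gamma> k * (f - fs k))"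
    have "(\<Sum>k\<in>I. \<gamma> k * (fs k - f)) = (\<Sum>k\<in>I. \<gamma> k * fs k) - (\<Sum>k\<in>I. \<gamma> k) * f"
      by (simp add: right_diff_distrib sum_subtractf sum_distrib_right)
    then have zero: "(\<Sum>k\<in>I. \<gamma> k * (fs k - f)) = 0" using sI unfolding f_def by simp
    have "(\<Sum>k\<in>I. \<gamma> k * (fs k - f)) = Sp - Sm"
      unfolding split Sp_def Sm_def by (simp add: algebra_simps sum_subtractf sum_negf)
    then have SpSm: "Sp = Sm" using zero by simp
    have "S = (\<Sum>k\<in>Ip. \<gamma> k * \<bar>fs k - f\<bar>) + (\<Sum>k\<in>Im. \<gamma> k * \<bar>fs k - f\<bar>)"
      unfolding S_def by (rule split)
    also have "(\<Sum>k\<in>Ip. \<gamma> k * \<bar>fs k - f\<bar>) = Sp" unfolding Sp_def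
      by (rule sum.cong) (auto simp: Ip_def)
    also have "(\<Sum>k\<in>Im. \<gamma> k * \<bar>fs k - f\<bar>) = Sm" unfolding Sm_def
      by (rule sum.cong) (auto simp: Im_def)
    finally have SS: "Sp = S/2" "Sm = S/2" using SpSm by auto
    define \<alpha> where "\<alpha> = (\<Sum>k\<in>Ip. \<gamma> k)"
    define \<beta> where "\<beta> = (\<Sum>k\<in>Im. \<gamma> k)"
    have ab: "\<alpha> + \<beta> = 1" using sI split[of \<gamma>] unfolding \<alpha>_def \<beta>_def by simp
    have a0: "\<alpha> \<ge> 0" and b0: "\<beta> \<ge> 0" unfolding \<alpha>_def \<beta>_def using g0 by (auto simp: Ip_def Im_def intro: sum_nonneg)
    have apos: "\<alpha> > 0"
    proof (rule ccontr)
      assume "\<not> \<alpha> > 0"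
      then have "\<alpha> = 0" using a0 by simp
      then have "\<forall>k\<in>Ip. \<gamma> k = 0" unfolding \<alpha>_def using sum_nonneg_eq_0_iff[OF finp] g0
        by (auto simp: Ip_def)
      then have "Sp = 0" unfolding Sp_def by simp
      then show False using SS Spos by simp
    qed
    have bpos: "\<beta> > 0"
    proof (rule ccontr)
      assume "\<not> \<beta> > 0"
      then have "\<beta> = 0" using b0 by simp
      then have "\<forall>k\<in>Im. \<gamma> k = 0" unfolding \<beta>_def using sum_nonneg_eq_0_iff[OF finm] g0
        by (auto simp: Im_def)
      then have "Sm = 0" unfolding Sm_def by simp
      then show False using SS Spos by simp
    qed
    define P where "P = (\<Sum>k\<in>Ip. (\<gamma> k / \<alpha>) *\<^sub>R z k)"
    define Q where "Q = (\<Sum>k\<in>Im. (\<gamma> k / \<beta>) *\<^sub>R z k)"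
    have sp1: "(\<Sum>k\<in>Ip. \<gamma> k / \<alpha>) = 1" using apos unfolding \<alpha>_def by (simp add: sum_divide_distrib[symmetric])
    have sm1: "(\<Sum>k\<in>Im. \<gamma> k / \<beta>) = 1" using bpos unfolding \<beta>_def by (simp add: sum_divide_distrib[symmetric])
    have gp: "\<And>k. k \<in> Ip \<Longrightarrow> \<gamma> k / \<alpha> \<ge> 0" using g0 apos by (auto simp: Ip_def)
    have gm: "\<And>k. k \<in> Im \<Longrightarrow> \<gamma> k / \<beta> \<ge> 0" using g0 bpos by (auto simp: Im_def)
    have zp: "\<And>k. k \<in> Ip \<Longrightarrow> z k \<in> D" using zD by (auto simp: Ip_def)
    have zm: "\<And>k. k \<in> Im \<Longrightarrow> z k \<in> D" using zD by (auto simp: Im_def)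
    have Ipne: "Ip \<noteq> {}" using sp1 by auto
    have Imne: "Im \<noteq> {}" using sm1 by auto
    have PD: "P \<in> D" unfolding P_def by (rule convex_sum[OF finp convD sp1 gp zp])
    have QD: "Q \<in> D" unfolding Q_def by (rule convex_sum[OF finm convD sm1 gm zm])
    have aP: "\<alpha> *\<^sub>R P = (\<Sum>k\<in>Ip. \<gamma> k *\<^sub>R z k)"
      unfolding P_def scaleR_sum_right using apos by simp
    have bQ: "\<beta> *\<^sub>R Q = (\<Sum>k\<in>Im. \<gamma> k *\<^sub>R z k)"
      unfolding Q_def scaleR_sum_right using bpos by simp
    have xPQ: "x = \<alpha> *\<^sub>R P + \<beta> *\<^sub>R Q" unfolding xs aP bQ by (rule splitv)
    have fx: "fst x = f" unfolding x_def by simp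
    have fP: "\<alpha> * (fst P - f) = S/2"
    proof -
      have "\<alpha> * fst P = fst (\<alpha> *\<^sub>R P)" by simp
      also have "\<dots> = (\<Sum>k\<in>Ip. \<gamma> k * fs k)" unfolding aP fst_sum by (simp add: z_def)
      finally have "\<alpha> * (fst P - f) = (\<Sum>k\<in>Ip. \<gamma> k * fs k) - \<alpha> * f" by (simp add: algebra_simps)
      also have "\<dots> = Sp" unfolding Sp_def \<alpha>_def
        by (simp add: algebra_simps sum_subtractf sum_distrib_right sum_distrib_left)
      finally show ?thesis using SS by simp
    qed
    have fQ: "\<beta> * (f - fst Q) = S/2"
    proof -
      have "\<beta> * fst Q = fst (\<beta> *\<^sub>R Q)" by simp
      also have "\<dots> = (\<Sum>k\<in>Im. \<gamma> k * fs k)" unfolding bQ fst_sum by (simp add: z_def)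
      finally have "\<beta> * (f - fst Q) = \<beta> * f - (\<Sum>k\<in>Im. \<gamma> k * fs k)" by (simp add: algebra_simps)
      also have "\<dots> = Sm" unfolding Sm_def \<beta>_def
        by (simp add: algebra_simps sum_subtractf sum_distrib_right sum_distrib_left)
      finally show ?thesis using SS by simp
    qed
    have jP: "\<alpha> * B P \<le> (\<Sum>k\<in>Ip. \<gamma> k * B (z k))"
    proof -
      have "B P \<le> (\<Sum>k\<in>Ip. (\<gamma> k / \<alpha>) * B (z k))"
        unfolding P_def by (rule convex_on_sum[OF finp Ipne cvx sp1 gp zp])
      then have "\<alpha> * B P \<le> \<alpha> * (\<Sum>k\<in>Ip. (\<gamma> k / \<alpha>) * B (z k))" using apos by simp
      also have "\<dots> = (\<Sum>k\<in>Ip. \<gamma> k * B (z k))" unfolding sum_distrib_left using apos by simp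
      finally show ?thesis .
    qed
    have jQ: "\<beta> * B Q \<le> (\<Sum>k\<in>Im. \<gamma> k * B (z k))"
    proof -
      have "B Q \<le> (\<Sum>k\<in>Im. (\<gamma> k / \<beta>) * B (z k))"
        unfolding Q_def by (rule convex_on_sum[OF finm Imne cvx sm1 gm zm])
      then have "\<beta> * B Q \<le> \<beta> * (\<Sum>k\<in>Im. (\<gamma> k / \<beta>) * B (z k))" using bpos by simp
      also have "\<dots> = (\<Sum>k\<in>Im. \<gamma> k * B (z k))" unfolding sum_distrib_left using bpos by simp
      finally show ?thesis .
    qed
    have jPQ: "\<alpha> * B P + \<beta> * B Q \<le> (\<Sum>k\<in>I. \<gamma> k * B (z k))" using jP jQ split[of "\<lambda>k. \<gamma> k * B (z k)"] by simp
    have midc': "\<And>u v. u \<in> D \<Longrightarrow> v \<in> D \<Longrightarrow>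
       (B u + B v)/2 - B ((1/2) *\<^sub>R (u+v)) \<ge> c ((1/2) *\<^sub>R (u+v)) * (fst u - fst ((1/2) *\<^sub>R (u+v)))^2"
      using midc by blast
    have key: "\<alpha> * B P + \<beta> * B Q - B x \<ge> 1/4 * c x * S^2"
    proof (cases "\<alpha> \<le> 1/2")
      case True
      have b: "\<beta> = 1 - \<alpha>" using ab by simp
      have tp: "\<alpha> * B P + (1-\<alpha>) * B Q - B x \<ge> 2*(1-\<alpha>) * c x * (fst Q - fst x)^2"
      proof (rule two_point[OF convD cvx midc' PD QD apos True])
        have e: "1 - \<alpha> = \<beta>" using ab by simp
        show "x = \<alpha> *\<^sub>R P + (1 - \<alpha>) *\<^sub>R Q" unfolding e by (rule xPQ)
      qed
      have d: "S = 2 * (\<beta> * (f - fst Q))" using fQ by simp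
      have "2*(1-\<alpha>) * c x * (fst Q - fst x)^2 - 1/4 * c x * S^2
           = c x * \<beta> * (fst Q - f)^2 * (2 - \<beta>)"
        unfolding d fx b by (simp add: power2_eq_square algebra_simps)
      also have "\<dots> \<ge> 0" using cpos bpos ab a0 by (intro mult_nonneg_nonneg) auto
      finally show ?thesis using tp unfolding b by linarith
    next
      case False
      have b: "\<alpha> = 1 - \<beta>" using ab by simp
      have bh: "\<beta> \<le> 1/2" using False ab by simp
      have tp: "\<beta> * B Q + (1-\<beta>) * B P - B x \<ge> 2*(1-\<beta>) * c x * (fst P - fst x)^2"
      proof (rule two_point[OF convD cvx midc' QD PD bpos bh])
        have e: "1 - \<beta> = \<alpha>" using ab by simp
        show "x = \<beta> *\<^sub>R Q + (1 - \<beta>) *\<^sub>R P" unfolding e using xPQ by (simp add: add.commute)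
      qed
      have d: "S = 2 * (\<alpha> * (fst P - f))" using fP by simp
      have "2*(1-\<beta>) * c x * (fst P - fst x)^2 - 1/4 * c x * S^2
           = c x * \<alpha> * (fst P - f)^2 * (2 - \<alpha>)"
        unfolding d fx b by (simp add: power2_eq_square algebra_simps)
      also have "\<dots> \<ge> 0" using cpos apos ab b0 by (intro mult_nonneg_nonneg) auto
      finally show ?thesis using tp unfolding b by linarith
    qed
    show ?thesis using key jPQ by linarith
  qed
  then show "- B (\<Sum>k=1..n. \<gamma> k * fs k, \<Sum>k=1..n. \<gamma> k *\<^sub>R Ns k)
         + (\<Sum>k=1..n. \<gamma> k * B (fs k, Ns k))
       \<ge> 1/4 * c (\<Sum>k=1..n. \<gamma> k * fs k, \<Sum>k=1..n. \<gamma> k *\<^sub>R Ns k)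
           * (\<Sum>k=1..n. \<gamma> k * \<bar>fs k - (\<Sum>j=1..n. \<gamma> j * fs j)\<bar>)^2"
    unfolding x_def f_def Nx_def S_def I_def z_def .
qed

end
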